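(* Let $n \ge 2$ be an integer. If $M$ is a real $n\times n$ matrix such that each of the numbers $0,1,\dots,n-1$ appears exactly $n$ times in $M$, then $$|\det M| \le n^n\,\frac{n-1}{2}\left(\frac{n+1}{12}\right)^{\frac{n-1}{2}}.$$ If $M$ is a real $n\times n$ matrix such that each of the numbers $1,2,\dots,n$ appears exactly $n$ times in $M$, then $$|\det M| \le n^n\,\frac{n+1}{2}\left(\frac{n+1}{12}\right)^{\frac{n-1}{2}}.$$ *)

theory Defs
  imports "HOL-Analysis.Analysis"
begin

end

theory Submission
  imports Defs
begin



lemma orth_norm:
  fixes Q :: "real^'n^'n"
  assumes "orthogonal_matrix Q"
  shows "norm (Q *v x) = norm x"
  using orthogonal_transformation_matrix[of "(*v) Q"] orthogonal_transformation_norm by (simp add: matrix_vector_mul_linear assms)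


lemma norm_sq_vec: "(norm (x::real^'n))^2 = (\<Sum>i\<in>UNIV. (x$i)^2)"
proof -
  have "(norm x)^2 = x \<bullet> x" by (rule power2_norm_eq_inner)
  also have "\<dots> = (\<Sum>i\<in>UNIV. x$i * x$i)" by (simp add: inner_vec_def)
  also have "\<dots> = (\<Sum>i\<in>UNIV. (x$i)^2)" by (simp add: power2_eq_square)
  finally show ?thesis .
qed

lemma row_mm: "row i (M ** Q) = transpose Q *v row i (M::real^'n^'n)"
  by (simp add: vec_eq_iff row_def matrix_matrix_mult_def matrix_vector_mult_def transpose_def mult.commute)

lemma frob: "(\<Sum>i\<in>UNIV. (norm (row i (A::real^'n^'n)))^2) = (\<Sum>j\<in>UNIV. (norm (column j A))^2)"
proof -
  have "(\<Sum>i\<in>UNIV. (norm (row i A))^2) = (\<Sum>i\<in>UNIV. \<Sum>j\<in>UNIV. (A$i$j)^2)"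
    by (simp only: norm_sq_vec) (simp add: row_def)
  also have "\<dots> = (\<Sum>j\<in>UNIV. \<Sum>i\<in>UNIV. (A$i$j)^2)" by (rule sum.swap)
  also have "\<dots> = (\<Sum>j\<in>UNIV. (norm (column j A))^2)"
    by (simp only: norm_sq_vec) (simp add: column_def)
  finally show ?thesis .
qed



lemma row_lambda: "row k (\<chi> k. f k) = f k"
  by (simp add: row_def vec_eq_iff)

lemma gs_exists:
  fixes A :: "real^'n^'n"
  assumes "finite P"
  shows "\<exists>B. det B = det A \<and> (\<forall>i. norm (row i B) \<le> norm (row i A)) \<and>
    (\<forall>i\<in>P. \<forall>j\<in>P. i \<noteq> j \<longrightarrow> orthogonal (row i B) (row j B))"
  using assms
proof (induction P rule: finite_induct)
  case empty
  then show ?case by (intro exI[of _ A]) auto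
next
  case (insert i P)
  then obtain B where B: "det B = det A" "\<forall>i. norm (row i B) \<le> norm (row i A)"
    "\<forall>i\<in>P. \<forall>j\<in>P. i \<noteq> j \<longrightarrow> orthogonal (row i B) (row j B)" by blast
  obtain y z where yz: "y \<in> span ((\<lambda>j. row j B) ` P)"
    "\<And>w. w \<in> span ((\<lambda>j. row j B) ` P) \<Longrightarrow> orthogonal z w" "row i B = y + z"
    using orthogonal_subspace_decomp_exists by metis
  define B' where "B' = (\<chi> k. if k = i then row i B + (- y) else row k B)"
  have sub: "(\<lambda>j. row j B) ` P \<subseteq> {row j B |j. j \<noteq> i}" using insert by auto
  have "- y \<in> vec.span {row j B |j. j \<noteq> i}"
    unfolding span_vec_eq using span_mono[OF sub] yz(1) span_neg by blast
  then have d: "det B' = det B" unfolding B'_def by (rule det_row_span)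
  have rz: "row i B' = z" using yz(3) by (simp add: B'_def row_lambda)
  have ro: "k \<noteq> i \<Longrightarrow> row k B' = row k B" for k by (simp add: B'_def row_lambda)
  have oyz: "orthogonal z y" using yz(1,2) by blast
  have pyth: "norm (row i B) ^ 2 = norm y ^ 2 + norm z ^ 2"
    using yz(3) oyz by (simp add: norm_add_Pythagorean orthogonal_commute)
  have "norm z \<le> norm (row i B)"
  proof -
    have "(norm z)^2 \<le> (norm (row i B))^2" using pyth by simp
    then show ?thesis using power2_le_imp_le norm_ge_zero by blast
  qed
  then have n: "\<forall>k. norm (row k B') \<le> norm (row k A)"
    using B(2) rz ro by (metis order.trans)
  have oz: "j \<in> P \<Longrightarrow> orthogonal z (row j B)" for j
    using yz(2) span_base by blast
  have "\<forall>a\<in>insert i P. \<forall>b\<in>insert i P. a \<noteq> b \<longrightarrow> orthogonal (row a B') (row b B')"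
  proof -
    have ro': "k \<in> P \<Longrightarrow> row k B' = row k B" for k using ro insert(2) by metis
    show ?thesis using B(3) oz rz by (auto simp: ro' orthogonal_commute)
  qed
  then show ?case using d B(1) n by (intro exI[of _ B']) auto
qed

lemma hadamard_sq:
  fixes A :: "real^'n^'n"
  shows "(det A)^2 \<le> (\<Prod>i\<in>UNIV. (norm (row i A))^2)"
proof -
  obtain B where B: "det B = det A" "\<forall>i. norm (row i B) \<le> norm (row i A)"
    "\<forall>i. \<forall>j. i \<noteq> j \<longrightarrow> orthogonal (row i B) (row j B)"
    using gs_exists[of UNIV A] by auto
  have e: "(B ** transpose B) $ i $ j = row i B \<bullet> row j B" for i j
    by (simp add: matrix_matrix_mult_def inner_vec_def transpose_def row_def)
  have "det (B ** transpose B) = (\<Prod>i\<in>UNIV. row i B \<bullet> row i B)"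
    by (subst det_diagonal) (use B(3) e in \<open>auto simp: orthogonal_def\<close>)
  moreover have "row i B \<bullet> row i B = (norm (row i B))^2" for i
    by (simp add: power2_norm_eq_inner)
  ultimately have "(det B)^2 = (\<Prod>i\<in>UNIV. (norm (row i B))^2)"
    by (simp add: det_mul power2_eq_square[of "det B"])
  also have "\<dots> \<le> (\<Prod>i\<in>UNIV. (norm (row i A))^2)"
    by (intro prod_mono) (use B(2) in \<open>auto intro: power_mono\<close>)
  finally show ?thesis using B(1) by simp
qed



lemma bern_aux:
  fixes x :: real
  assumes "0 \<le> x" "x \<le> 1"
  shows "(1 - x)^m * (1 + real m * x) \<le> 1"
proof (induction m)
  case 0 then show ?case by simp
next
  case (Suc m)
  have "(1 - x)^(Suc m) * (1 + real (Suc m) * x) = (1-x)^m * ((1-x) * (1 + real (Suc m) * x))"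
    by (simp add: algebra_simps)
  also have "\<dots> \<le> (1-x)^m * (1 + real m * x)"
  proof (rule mult_left_mono)
    show "(1-x) * (1 + real (Suc m) * x) \<le> 1 + real m * x"
      using assms by (simp add: algebra_simps)
    show "0 \<le> (1-x)^m" using assms by simp
  qed
  finally show ?case using Suc by linarith
qed

lemma scalar_opt:
  fixes a2 s T :: real and m :: nat
  assumes "0 \<le> a2" "a2 \<le> s" "s \<le> T" "T \<le> (real m + 1) * a2" "m \<ge> 1"
  shows "s * ((T - s) / m)^m \<le> a2 * ((T - a2) / m)^m"
proof -
  define c where "c = T - a2"
  define d where "d = s - a2"
  have c0: "0 \<le> c" "d \<le> c" "0 \<le> d" using assms by (auto simp: c_def d_def)
  have key: "s * (T - s)^m \<le> a2 * (T - a2)^m"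
  proof (cases "c = 0")
    case True
    then have "s = a2" using c0 d_def by simp
    then show ?thesis by simp
  next
    case False
    then have cp: "c > 0" using c0 by simp
    define x where "x = d / c"
    have x01: "0 \<le> x" "x \<le> 1" using c0 cp by (auto simp: x_def)
    have "T - s = c * (1 - x)" using cp by (simp add: x_def c_def d_def field_simps)
    then have "s * (T - s)^m = c^m * (s * (1-x)^m)" by (simp add: power_mult_distrib)
    also have "\<dots> \<le> c^m * (a2 * ((1-x)^m * (1 + real m * x)))"
    proof (intro mult_left_mono)
      have "s \<le> a2 * (1 + real m * x)"
      proof -
        have "d \<le> a2 * real m * d / c"
        proof -
          have "c \<le> a2 * real m" using assms by (simp add: c_def algebra_simps)
          then have "d * c \<le> d * (a2 * real m)" using c0 by (intro mult_left_mono) auto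
          then show ?thesis using cp by (simp add: field_simps)
        qed
        then show ?thesis by (simp add: x_def d_def algebra_simps)
      qed
      then have "s * (1-x)^m \<le> a2 * (1 + real m * x) * (1-x)^m"
        using x01 by (intro mult_right_mono) auto
      then show "s * (1-x)^m \<le> a2 * ((1-x)^m * (1 + real m * x))" by (simp add: algebra_simps)
      show "0 \<le> c^m" using c0 by simp
    qed
    also have "\<dots> \<le> c^m * a2"
      using bern_aux[OF x01, of m] c0 assms(1)
      by (intro mult_left_mono) (auto intro: mult_left_le)
    finally show ?thesis by (simp add: c_def mult.commute)
  qed
  have "s * ((T - s) / m)^m = (s * (T - s)^m) / real m ^ m" by (simp add: power_divide)
  also have "\<dots> \<le> (a2 * (T - a2)^m) / real m ^ m" using key assms by (intro divide_right_mono) auto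
  also have "\<dots> = a2 * ((T - a2) / m)^m" by (simp add: power_divide)
  finally show ?thesis .
qed


lemma amgm:
  fixes t :: "'a \<Rightarrow> real"
  assumes "finite J" "J \<noteq> {}" "\<And>j. j \<in> J \<Longrightarrow> t j \<ge> 0"
  shows "(\<Prod>j\<in>J. t j) \<le> ((\<Sum>j\<in>J. t j) / card J) ^ card J"
proof -
  have k: "card J > 0" using assms by (simp add: card_gt_0_iff)
  have p0: "(\<Prod>j\<in>J. t j) \<ge> 0" using assms by (simp add: prod_nonneg)
  have g: "(\<Prod>j\<in>J. t j) powr (1 / card J) \<le> (\<Sum>j\<in>J. t j) / card J"
    using arith_geom_mean[OF assms] by (simp add: sum_divide_distrib)
  have "(\<Prod>j\<in>J. t j) = ((\<Prod>j\<in>J. t j) powr (1 / card J)) ^ card J"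
  proof (cases "(\<Prod>j\<in>J. t j) = 0")
    case True then show ?thesis using k by simp
  next
    case False then show ?thesis using k p0 by (simp add: powr_power powr_one)
  qed
  also have "\<dots> \<le> ((\<Sum>j\<in>J. t j) / card J) ^ card J"
    by (intro power_mono g) simp
  finally show ?thesis .
qed

lemma core:
  fixes M :: "real^'n^'n"
  assumes n2: "CARD('n) \<ge> 2"
  and S_def: "S = (\<Sum>i\<in>UNIV. \<Sum>j\<in>UNIV. M$i$j)"
  and T_def: "T = (\<Sum>i\<in>UNIV. \<Sum>j\<in>UNIV. (M$i$j)^2)"
  and cond: "T \<le> real CARD('n) * (S / real CARD('n))^2"
  shows "(det M)^2 \<le> (S / real CARD('n))^2 * ((T - (S / real CARD('n))^2) / (real CARD('n) - 1)) ^ (CARD('n) - 1)"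
proof -
  define N where "N = CARD('n)"
  define nr where "nr = real N"
  have nrpos: "nr > 0" using n2 by (simp add: nr_def N_def)
  define v :: "real^'n" where "v = (\<chi> i. 1 / sqrt nr)"
  have "(norm v)^2 = (\<Sum>i\<in>(UNIV::'n set). (1 / sqrt nr)^2)" by (simp add: norm_sq_vec v_def)
  also have "\<dots> = 1" using nrpos by (simp add: power_divide nr_def N_def)
  finally have nv: "norm v = 1" by (smt (verit) norm_ge_zero power2_eq_1_iff)
  obtain k0 :: 'n where True by simp
  obtain Q where Q: "orthogonal_matrix Q" "Q *v axis k0 1 = v"
    using orthogonal_matrix_exists_basis[OF nv] by metis
  have cQ: "column k0 Q = v" using Q(2) by (simp add: matrix_vector_mult_basis)
  define t where "t j = (norm (M *v column j Q))^2" for j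
  have colmm: "column j (M ** Q) = M *v column j Q" for j
    by (simp add: vec_eq_iff column_def matrix_matrix_mult_def matrix_vector_mult_def)
  have dQ: "det Q = 1 \<or> det Q = -1" using det_orthogonal_matrix[OF Q(1)] .
  have "(det M)^2 = (det (transpose (M ** Q)))^2"
    using dQ by (auto simp: det_mul power2_eq_square)
  also have "\<dots> \<le> (\<Prod>j\<in>UNIV. t j)"
    using hadamard_sq[of "transpose (M ** Q)"] by (simp add: t_def colmm)
  finally have h: "(det M)^2 \<le> (\<Prod>j\<in>UNIV. t j)" .
  have oQt: "orthogonal_matrix (transpose Q)" using Q(1) by simp
  have "(\<Sum>j\<in>UNIV. t j) = (\<Sum>i\<in>UNIV. (norm (row i (M ** Q)))^2)"
    by (simp add: t_def frob colmm)
  also have "\<dots> = (\<Sum>i\<in>UNIV. (norm (row i M))^2)"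
    by (simp only: row_mm orth_norm[OF oQt])
  also have "\<dots> = T" by (simp only: norm_sq_vec T_def) (simp add: row_def)
  finally have sumt: "(\<Sum>j\<in>UNIV. t j) = T" .
  define s where "s = t k0"
  have "v \<bullet> (M *v v) = (\<Sum>i\<in>UNIV. (1 / sqrt nr) * (\<Sum>j\<in>UNIV. M$i$j * (1 / sqrt nr)))"
    by (simp add: inner_vec_def v_def matrix_vector_mult_def)
  also have "\<dots> = (\<Sum>i\<in>UNIV. \<Sum>j\<in>UNIV. M$i$j * ((1 / sqrt nr) * (1 / sqrt nr)))"
    by (simp add: sum_distrib_left mult_ac)
  also have "\<dots> = (\<Sum>i\<in>UNIV. \<Sum>j\<in>UNIV. M$i$j * (1 / nr))"
  proof -
    have "(1 / sqrt nr) * (1 / sqrt nr) = 1 / nr" using nrpos by (simp add: field_simps)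
    then show ?thesis by simp
  qed
  also have "\<dots> = S / nr"
    by (simp add: sum_divide_distrib S_def)
  finally have vMv: "v \<bullet> (M *v v) = S / nr" .
  have "\<bar>S / nr\<bar> \<le> norm (M *v v)"
    using Cauchy_Schwarz_ineq2[of v "M *v v"] nv vMv by simp
  then have as: "(S / nr)^2 \<le> s"
    unfolding s_def t_def cQ by (metis abs_le_square_iff abs_norm_cancel power2_abs)
  have t0: "t j \<ge> 0" for j by (simp add: t_def)
  have sT: "s \<le> T" unfolding s_def sumt[symmetric]
    by (rule member_le_sum) (auto simp: t0)
  define J where "J = (UNIV::'n set) - {k0}"
  have cJ: "card J = N - 1" by (simp add: J_def N_def card_Diff_singleton)
  have Jne: "J \<noteq> {}" using n2 cJ by (auto simp: N_def)
  have "(\<Prod>j\<in>UNIV. t j) = s * (\<Prod>j\<in>J. t j)"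
    by (simp add: J_def s_def prod.remove)
  also have "\<dots> \<le> s * (((\<Sum>j\<in>J. t j) / card J) ^ card J)"
    using amgm[of J t] Jne t0 as by (intro mult_left_mono) (auto simp: J_def order.trans[OF zero_le_power2])
  also have "(\<Sum>j\<in>J. t j) = T - s"
    using sumt sum.remove[of UNIV k0 t] by (simp add: J_def s_def)
  finally have h2: "(\<Prod>j\<in>UNIV. t j) \<le> s * ((T - s) / real (N - 1)) ^ (N - 1)"
    using cJ by simp
  have "s * ((T - s) / real (N - 1)) ^ (N - 1) \<le> (S / nr)^2 * ((T - (S / nr)^2) / real (N - 1)) ^ (N - 1)"
    by (rule scalar_opt) (use as sT cond n2 in \<open>auto simp: nr_def N_def of_nat_diff\<close>)
  then show ?thesis using h h2 n2 by (simp add: nr_def N_def of_nat_diff)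
qed




lemma count_sum:
  fixes M :: "real^'n^'n" and vals :: "nat set" and f :: "real \<Rightarrow> real"
  assumes fin: "finite vals" and cv: "card vals = CARD('n)"
    and h: "\<forall>k\<in>vals. card {(i, j). M $ i $ j = real k} = CARD('n)"
  shows "(\<Sum>i\<in>UNIV. \<Sum>j\<in>UNIV. f (M$i$j)) = real CARD('n) * (\<Sum>k\<in>vals. f (real k))"
proof -
  define E where "E k = {(i, j). M $ i $ j = real k}" for k
  have fE: "finite (E k)" for k by simp
  have dis: "\<forall>k\<in>vals. \<forall>l\<in>vals. k \<noteq> l \<longrightarrow> E k \<inter> E l = {}" by (auto simp: E_def)
  have "card (\<Union>k\<in>vals. E k) = (\<Sum>k\<in>vals. card (E k))"
    using card_UN_disjoint[OF fin _ dis] fE by simp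
  also have "\<dots> = CARD('n) * CARD('n)" using h cv by (simp add: E_def)
  also have "\<dots> = card (UNIV :: ('n \<times> 'n) set)" by (simp add: UNIV_Times_UNIV[symmetric] card_cartesian_product del: UNIV_Times_UNIV)
  finally have "(\<Union>k\<in>vals. E k) = UNIV" by (intro card_subset_eq) auto
  then have U: "(UNIV :: ('n \<times> 'n) set) = (\<Union>k\<in>vals. E k)" by simp
  have "(\<Sum>i\<in>UNIV. \<Sum>j\<in>UNIV. f (M$i$j)) = (\<Sum>p\<in>(UNIV :: ('n \<times> 'n) set). f (M $ fst p $ snd p))"
    by (simp add: sum.cartesian_product UNIV_Times_UNIV[symmetric] case_prod_beta del: UNIV_Times_UNIV)
  also have "\<dots> = (\<Sum>k\<in>vals. \<Sum>p\<in>E k. f (M $ fst p $ snd p))"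
    unfolding U by (rule sum.UNION_disjoint[OF fin]) (use dis in auto)
  also have "\<dots> = (\<Sum>k\<in>vals. \<Sum>p\<in>E k. f (real k))"
    by (intro sum.cong refl) (auto simp: E_def)
  also have "\<dots> = (\<Sum>k\<in>vals. real CARD('n) * f (real k))" using h by (simp add: E_def)
  finally show ?thesis by (simp add: sum_distrib_left)
qed

lemma s1: "(\<Sum>k<n. real k) = real n * (real n - 1) / 2"
  by (induction n) (auto simp: algebra_simps)
lemma s2: "(\<Sum>k<n. (real k)^2) = real n * (real n - 1) * (2 * real n - 1) / 6"
  by (induction n) (auto simp: algebra_simps power2_eq_square)
lemma s3: "(\<Sum>k\<in>{1..n}. real k) = real n * (real n + 1) / 2"
  by (induction n) (auto simp: algebra_simps)
lemma s4: "(\<Sum>k\<in>{1..n}. (real k)^2) = real n * (real n + 1) * (2 * real n + 1) / 6"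
  by (induction n) (auto simp: algebra_simps power2_eq_square)

lemma final_alg:
  fixes nr A X :: real
  assumes "N \<ge> 1"
  shows "(nr ^ N * A)^2 * X ^ (N - 1) = (nr * A)^2 * (nr^2 * X) ^ (N - 1)"
proof -
  obtain m where N: "N = Suc m" using assms by (cases N) auto
  show ?thesis unfolding N by (simp add: power_mult_distrib power_Suc power_mult[symmetric] mult.commute mult.left_commute)
qed



lemma finish:
  fixes M :: "real^'n^'n" and \<mu> :: real
  assumes n2: "CARD('n) \<ge> 2"
  and S: "(\<Sum>i\<in>UNIV. \<Sum>j\<in>UNIV. M$i$j) = real CARD('n) * (real CARD('n) * \<mu>)"
  and Tc: "(\<Sum>i\<in>UNIV. \<Sum>j\<in>UNIV. (M$i$j)^2) - (real CARD('n) * \<mu>)^2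
            = (real CARD('n))^2 * (real CARD('n) - 1) * (real CARD('n) + 1) / 12"
  and cond: "(\<Sum>i\<in>UNIV. \<Sum>j\<in>UNIV. (M$i$j)^2) \<le> real CARD('n) * (real CARD('n) * \<mu>)^2"
  and mu: "\<mu> \<ge> 0"
  shows "\<bar>det M\<bar> \<le> real CARD('n) ^ CARD('n) * \<mu> * ((real CARD('n) + 1) / 12) powr ((real CARD('n) - 1) / 2)"
proof -
  define N where "N = CARD('n)"
  define nr where "nr = real N"
  define X where "X = (nr + 1) / 12"
  have nr2: "nr \<ge> 2" using n2 by (simp add: nr_def N_def)
  have Xp: "X > 0" using nr2 by (simp add: X_def)
  have Sn: "(\<Sum>i\<in>UNIV. \<Sum>j\<in>UNIV. M$i$j) / nr = nr * \<mu>"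
    using S nr2 by (simp add: nr_def N_def)
  have d: "(det M)^2 \<le> (nr * \<mu>)^2 * (((\<Sum>i\<in>UNIV. \<Sum>j\<in>UNIV. (M$i$j)^2) - (nr * \<mu>)^2) / (nr - 1)) ^ (N - 1)"
    using core[where M=M, OF n2 refl refl] cond Sn by (simp add: nr_def N_def)
  also have "((\<Sum>i\<in>UNIV. \<Sum>j\<in>UNIV. (M$i$j)^2) - (nr * \<mu>)^2) / (nr - 1) = nr^2 * X"
    using Tc nr2 by (simp add: nr_def N_def X_def field_simps)
  also have "(nr * \<mu>)^2 * (nr^2 * X) ^ (N - 1) = (nr ^ N * \<mu>)^2 * X ^ (N - 1)"
    using final_alg[of N nr \<mu> X] n2 by (simp add: N_def)
  also have "X ^ (N - 1) = (X powr ((nr - 1) / 2))^2"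
  proof -
    have p1: "(X powr ((nr - 1) / 2))^2 = X powr (real 2 * ((nr - 1) / 2))"
      using Xp by (intro powr_power) simp
    have e: "real 2 * ((nr - 1) / 2) = real (N - 1)" using n2 by (simp add: nr_def N_def of_nat_diff)
    have "X powr (real (N - 1)) = X ^ (N - 1)" using Xp by (rule powr_realpow)
    then show ?thesis using p1 e by metis
  qed
  finally have "\<bar>det M\<bar>^2 \<le> (nr ^ N * \<mu> * X powr ((nr - 1) / 2))^2"
    by (simp add: power_mult_distrib)
  then have "\<bar>det M\<bar> \<le> nr ^ N * \<mu> * X powr ((nr - 1) / 2)"
    by (rule power2_le_imp_le) (use mu nr2 in simp)
  then show ?thesis by (simp add: nr_def N_def X_def)
qed



theorem mainTheorem10:
  fixes M :: "real ^ 'n ^ 'n"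
  assumes "CARD('n) \<ge> 2"
  shows "((\<forall>k::nat. k < CARD('n) \<longrightarrow>
             card {(i, j). M $ i $ j = real k} = CARD('n)) \<longrightarrow>
          \<bar>det M\<bar> \<le> real CARD('n) ^ CARD('n) * ((real CARD('n) - 1) / 2)
             * ((real CARD('n) + 1) / 12) powr ((real CARD('n) - 1) / 2))
       \<and> ((\<forall>k::nat. 1 \<le> k \<and> k \<le> CARD('n) \<longrightarrow>
             card {(i, j). M $ i $ j = real k} = CARD('n)) \<longrightarrow>
          \<bar>det M\<bar> \<le> real CARD('n) ^ CARD('n) * ((real CARD('n) + 1) / 2)
             * ((real CARD('n) + 1) / 12) powr ((real CARD('n) - 1) / 2))"
proof (intro conjI impI)
  define nr where "nr = real CARD('n)"
  have nr2: "nr \<ge> 2" using assms by (simp add: nr_def)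
  {
    assume H: "\<forall>k::nat. k < CARD('n) \<longrightarrow> card {(i, j). M $ i $ j = real k} = CARD('n)"
    have h: "\<forall>k\<in>{..<CARD('n)}. card {(i, j). M $ i $ j = real k} = CARD('n)" using H by auto
    have S: "(\<Sum>i\<in>UNIV. \<Sum>j\<in>UNIV. M$i$j) = nr * (nr * ((nr - 1) / 2))"
      using count_sum[of "{..<CARD('n)}" M "\<lambda>x. x"] h by (simp add: s1 nr_def)
    have T: "(\<Sum>i\<in>UNIV. \<Sum>j\<in>UNIV. (M$i$j)^2) = nr * (nr * (nr - 1) * (2 * nr - 1) / 6)"
      using count_sum[of "{..<CARD('n)}" M "\<lambda>x. x^2"] h by (simp add: s2 nr_def)
    have Tc: "(\<Sum>i\<in>UNIV. \<Sum>j\<in>UNIV. (M$i$j)^2) - (nr * ((nr - 1) / 2))^2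
            = nr^2 * (nr - 1) * (nr + 1) / 12"
      unfolding T by (simp add: field_simps power2_eq_square)
    have "0 \<le> nr^2 * (nr - 1) * (3 * nr - 1) * (nr - 2) / 12" using nr2 by simp
    also have "\<dots> = nr * (nr * ((nr - 1) / 2))^2 - (\<Sum>i\<in>UNIV. \<Sum>j\<in>UNIV. (M$i$j)^2)"
      unfolding T by (simp add: field_simps power2_eq_square)
    finally have cond: "(\<Sum>i\<in>UNIV. \<Sum>j\<in>UNIV. (M$i$j)^2) \<le> nr * (nr * ((nr - 1) / 2))^2" by simp
    show "\<bar>det M\<bar> \<le> real CARD('n) ^ CARD('n) * ((real CARD('n) - 1) / 2)
             * ((real CARD('n) + 1) / 12) powr ((real CARD('n) - 1) / 2)"
      using finish[OF assms S[unfolded nr_def] Tc[unfolded nr_def] cond[unfolded nr_def]] nr2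
      by (simp add: nr_def)
  }
  {
    assume H: "\<forall>k::nat. 1 \<le> k \<and> k \<le> CARD('n) \<longrightarrow> card {(i, j). M $ i $ j = real k} = CARD('n)"
    have h: "\<forall>k\<in>{1..CARD('n)}. card {(i, j). M $ i $ j = real k} = CARD('n)" using H by auto
    have S: "(\<Sum>i\<in>UNIV. \<Sum>j\<in>UNIV. M$i$j) = nr * (nr * ((nr + 1) / 2))"
      using count_sum[of "{1..CARD('n)}" M "\<lambda>x. x"] h s3[of "CARD('n)"] by (simp add: nr_def)
    have T: "(\<Sum>i\<in>UNIV. \<Sum>j\<in>UNIV. (M$i$j)^2) = nr * (nr * (nr + 1) * (2 * nr + 1) / 6)"
      using count_sum[of "{1..CARD('n)}" M "\<lambda>x. x^2"] h s4[of "CARD('n)"] by (simp add: nr_def)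
    have Tc: "(\<Sum>i\<in>UNIV. \<Sum>j\<in>UNIV. (M$i$j)^2) - (nr * ((nr + 1) / 2))^2
            = nr^2 * (nr - 1) * (nr + 1) / 12"
      unfolding T by (simp add: field_simps power2_eq_square)
    have "0 \<le> nr^2 * (nr + 1) * (3 * nr + 2) * (nr - 1) / 12" using nr2 by simp
    also have "\<dots> = nr * (nr * ((nr + 1) / 2))^2 - (\<Sum>i\<in>UNIV. \<Sum>j\<in>UNIV. (M$i$j)^2)"
      unfolding T by (simp add: field_simps power2_eq_square)
    finally have cond: "(\<Sum>i\<in>UNIV. \<Sum>j\<in>UNIV. (M$i$j)^2) \<le> nr * (nr * ((nr + 1) / 2))^2" by simp
    show "\<bar>det M\<bar> \<le> real CARD('n) ^ CARD('n) * ((real CARD('n) + 1) / 2)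
             * ((real CARD('n) + 1) / 12) powr ((real CARD('n) - 1) / 2)"
      using finish[OF assms S[unfolded nr_def] Tc[unfolded nr_def] cond[unfolded nr_def]] nr2
      by (simp add: nr_def)
  }
qed

end
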